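(* Under the Gaussian tile model described in the context, with the location $X$ uniformly distributed a priori on $[L]$, the maximum likelihood location estimate is given by minimizing the norm induced by a generalized inner product: $$\hat{\ell}_{\mathrm{GIP}_{2D}}=\operatorname*{arg\,min}_{\ell\in[L]}\big\|\vec{\mathbf{y}}-\vec{\mathbf{y}}^\ell\big\|_{\mathbf{G}},$$ where $\|\mathbf v\|_{\mathbf G}=\sqrt{\mathbf v^{\top}\mathbf G\mathbf v}$ and $\mathbf{G}$ is the $N_wN_d\times N_wN_d$ diagonal matrix with $$\mathbf{G}_{k+(j-1)N_w,\,k+(j-1)N_w}=\frac{1}{2\sigma_i^2+N_0/\tilde A_{k,j}},\qquad k\in[N_w],\ j\in[N_d].$$
   Context: Setting: each image is a matrix of $N_w\times N_d$ tiles; for a matrix $\mathbf Y$, its column-wise vectorization $\vec{\mathbf y}\in\mathbb R^{N_wN_d}$ has $\vec y_{k+(j-1)N_w}=y_{k,j}$. The captured image is $Y_{k,j}=a_{k,j}+n^i_{k,j}+n^s_{k,j}$, where $a_{k,j}$ is the road signal, $n^i_{k,j}\sim\mathcal N(0,\sigma_i^2)$ is intrinsic noise and $n^s_{k,j}\sim\mathcal N(0,N_0/\tilde A_{k,j})$ is sensor noise, with $\sigma_i^2>0$, $N_0>0$, and $\tilde A_{k,j}>0$ the area of the projection of road tile $(k,j)$ onto the camera's focal plane. The $\ell$-th global map section ($\ell\in[L]$) is $Y^\ell_{k,j}=a^\ell_{k,j}+n^{i,\ell}_{k,j}$ with $n^{i,\ell}_{k,j}\sim\mathcal N(0,\sigma_i^2)$;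 if the true location is $\ell$ then $a_{k,j}=a^\ell_{k,j}$ for all tiles. All noises are independent across tiles and of one another. Conditional on $X=\ell$, the captured image depends on the map only through $\mathbf Y^\ell$, and given $Y^\ell_{k,j}=y^\ell_{k,j}$ the signal is modeled as $a^\ell_{k,j}\sim\mathcal N(y^\ell_{k,j},\sigma_i^2)$, independently across tiles. The maximum likelihood location estimate is the $\ell$ maximizing $\Pr(X=\ell\mid\mathbf Y=\mathbf y,\mathbf Y^l=\mathbf y^l, l\in[L])$. *)

theory Defs
  imports "HOL-Probability.Probability"
begin

text \<open>Images are real-valued functions of the tile index (k,j), k in 1..Nw, j in 1..Nd.
  sig is the standard deviation of the intrinsic noise (variance sig^2).\<close>

text \<open>Column-wise vectorization: vec_y (k + (j-1) Nw) = y k j, indices 1..Nw*Nd.\<close>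
definition vecz :: "nat \<Rightarrow> (nat \<Rightarrow> nat \<Rightarrow> real) \<Rightarrow> nat \<Rightarrow> real" where
  "vecz Nw Y p = Y ((p - 1) mod Nw + 1) ((p - 1) div Nw + 1)"

definition Gmat :: "nat \<Rightarrow> real \<Rightarrow> real \<Rightarrow> (nat \<Rightarrow> nat \<Rightarrow> real) \<Rightarrow> nat \<Rightarrow> nat \<Rightarrow> real" where
  "Gmat Nw sig N0 At p q =
     (if p = q then 1 / (2 * sig\<^sup>2 + N0 / At ((p - 1) mod Nw + 1) ((p - 1) div Nw + 1))
      else 0)"

definition Gnorm :: "nat \<Rightarrow> (nat \<Rightarrow> nat \<Rightarrow> real) \<Rightarrow> (nat \<Rightarrow> real) \<Rightarrow> real" where
  "Gnorm n G v = sqrt (\<Sum>p\<in>{1..n}. \<Sum>q\<in>{1..n}. v p * G p q * v q)"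

text \<open>Density at y of a + n_i + n_s, where a ~ N(m, sig^2) (signal given map value m),
  n_i ~ N(0, sig^2), n_s ~ N(0, N0/At), all independent (convolution of densities).\<close>
definition tile_lik :: "real \<Rightarrow> real \<Rightarrow> real \<Rightarrow> real \<Rightarrow> real \<Rightarrow> real" where
  "tile_lik sig N0 At m y =
     (\<integral>a. normal_density m sig a *
        (\<integral>u. normal_density 0 sig u * normal_density 0 (sqrt (N0 / At)) (y - a - u) \<partial>lborel)
      \<partial>lborel)"

definition img_lik :: "nat \<Rightarrow> nat \<Rightarrow> real \<Rightarrow> real \<Rightarrow> (nat \<Rightarrow> nat \<Rightarrow> real)
    \<Rightarrow> (nat \<Rightarrow> nat \<Rightarrow> real) \<Rightarrow> (nat \<Rightarrow> nat \<Rightarrow> real) \<Rightarrow> real" where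
  "img_lik Nw Nd sig N0 At yl y =
     (\<Prod>k\<in>{1..Nw}. \<Prod>j\<in>{1..Nd}. tile_lik sig N0 (At k j) (yl k j) (y k j))"

definition posterior :: "nat \<Rightarrow> nat \<Rightarrow> nat \<Rightarrow> real \<Rightarrow> real \<Rightarrow> (nat \<Rightarrow> nat \<Rightarrow> real)
    \<Rightarrow> (nat \<Rightarrow> nat \<Rightarrow> nat \<Rightarrow> real) \<Rightarrow> (nat \<Rightarrow> nat \<Rightarrow> real) \<Rightarrow> nat \<Rightarrow> real" where
  "posterior L Nw Nd sig N0 At ymap y l =
     (1 / real L) * img_lik Nw Nd sig N0 At (ymap l) y /
     (\<Sum>m\<in>{1..L}. (1 / real L) * img_lik Nw Nd sig N0 At (ymap m) y)"

definition max_lik_estimates where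
  "max_lik_estimates L Nw Nd sig N0 At ymap y =
     {l \<in> {1..L}. \<forall>m\<in>{1..L}.
        posterior L Nw Nd sig N0 At ymap y m \<le> posterior L Nw Nd sig N0 At ymap y l}"

end

theory Submission
  imports Defs
begin


lemma conv_nd:
  assumes s: "0 < \<sigma>" and t: "0 < \<tau>"
  shows "(\<integral>a. normal_density \<mu> \<sigma> a * normal_density 0 \<tau> (x - a) \<partial>lborel)
         = normal_density \<mu> (sqrt (\<sigma>\<^sup>2 + \<tau>\<^sup>2)) x"
proof -
  have "(\<integral>\<^sup>+a. ennreal (normal_density \<mu> \<sigma> a * normal_density 0 \<tau> (x - a)) \<partial>lborel)
     = (\<integral>\<^sup>+b. ennreal (normal_density \<mu> \<sigma> (\<mu> + b) * normal_density 0 \<tau> (x - (\<mu> + b))) \<partial>lborel)"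
    using nn_integral_real_affine[where c=1 and t=\<mu> and f="\<lambda>a. ennreal (normal_density \<mu> \<sigma> a * normal_density 0 \<tau> (x - a))"] by simp
  also have "\<dots> = (\<integral>\<^sup>+b. ennreal (normal_density 0 \<tau> ((x - \<mu>) - b) * normal_density 0 \<sigma> b) \<partial>lborel)"
    by (simp add: normal_density_def algebra_simps)
  also have "\<dots> = ennreal (normal_density 0 (sqrt (\<tau>\<^sup>2 + \<sigma>\<^sup>2)) (x - \<mu>))"
    using conv_normal_density_zero_mean[OF t s] by metis
  also have "normal_density 0 (sqrt (\<tau>\<^sup>2 + \<sigma>\<^sup>2)) (x - \<mu>) = normal_density \<mu> (sqrt (\<sigma>\<^sup>2 + \<tau>\<^sup>2)) x"
    by (simp add: normal_density_def add.commute)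
  finally have "has_bochner_integral lborel (\<lambda>a. normal_density \<mu> \<sigma> a * normal_density 0 \<tau> (x - a))
      (normal_density \<mu> (sqrt (\<sigma>\<^sup>2 + \<tau>\<^sup>2)) x)"
    by (intro has_bochner_integral_nn_integral) (auto simp: normal_density_nonneg)
  then show ?thesis by (simp add: has_bochner_integral_integral_eq)
qed

lemma tile_lik_eq:
  assumes "0 < sig" "0 < N0" "0 < At"
  shows "tile_lik sig N0 At m y = normal_density m (sqrt (2 * sig\<^sup>2 + N0 / At)) y"
proof -
  have s: "0 < sqrt (N0 / At)" using assms by simp
  have "\<And>a. (\<integral>u. normal_density 0 sig u * normal_density 0 (sqrt (N0 / At)) (y - a - u) \<partial>lborel)
     = normal_density 0 (sqrt (sig\<^sup>2 + N0 / At)) (y - a)"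
    using conv_nd[OF assms(1) s, of 0] assms by simp
  then have "tile_lik sig N0 At m y = (\<integral>a. normal_density m sig a * normal_density 0 (sqrt (sig\<^sup>2 + N0 / At)) (y - a) \<partial>lborel)"
    by (simp add: tile_lik_def)
  also have "\<dots> = normal_density m (sqrt (sig\<^sup>2 + (sqrt (sig\<^sup>2 + N0 / At))\<^sup>2)) y"
    by (rule conv_nd) (use assms in \<open>auto intro: add_pos_pos\<close>)
  also have "sig\<^sup>2 + (sqrt (sig\<^sup>2 + N0 / At))\<^sup>2 = 2 * sig\<^sup>2 + N0 / At"
    using assms by (simp add: add_nonneg_nonneg)
  finally show ?thesis .
qed

lemma reindex_sum:
  fixes f :: "nat \<Rightarrow> nat \<Rightarrow> real"
  assumes "Nw \<ge> 1"
  shows "(\<Sum>p\<in>{1..Nw*Nd}. f ((p - 1) mod Nw + 1) ((p - 1) div Nw + 1))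
       = (\<Sum>k\<in>{1..Nw}. \<Sum>j\<in>{1..Nd}. f k j)"
proof -
  let ?h = "\<lambda>p. ((p - 1) mod Nw + 1, (p - 1) div Nw + 1)"
  let ?g = "\<lambda>(k, j). k + (j - 1) * Nw"
  have b: "bij_betw ?h {1..Nw*Nd} ({1..Nw} \<times> {1..Nd})"
  proof (rule bij_betw_byWitness[where f'="?g"])
    show "\<forall>a\<in>{1..Nw * Nd}. ?g (?h a) = a"
      using assms by (auto simp: mod_div_mult_eq add.commute)
    show "\<forall>a'\<in>{1..Nw} \<times> {1..Nd}. ?h (?g a') = a'"
    proof
      fix a' assume "a' \<in> {1..Nw} \<times> {1..Nd}"
      then obtain k j where a: "a' = (k, j)" "1 \<le> k" "k \<le> Nw" "1 \<le> j" "j \<le> Nd" by auto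
      have e: "k + (j - 1) * Nw - 1 = (k - 1) + (j - 1) * Nw" using a by simp
      have lt: "k - 1 < Nw" using a by simp
      have m: "((k - 1) + (j - 1) * Nw) mod Nw = k - 1"
        using lt by (simp only: mod_mult_self1 mod_less)
      have d: "((k - 1) + (j - 1) * Nw) div Nw = j - 1"
        using lt a assms by (simp only: div_mult_self1 div_less)
      show "?h (?g a') = a'" unfolding a(1) split e m d using a by simp
    qed
    show "?h ` {1..Nw * Nd} \<subseteq> {1..Nw} \<times> {1..Nd}"
    proof
      fix x assume "x \<in> ?h ` {1..Nw * Nd}"
      then obtain p where p: "p \<in> {1..Nw*Nd}" "x = ?h p" by auto
      have "(p - 1) mod Nw < Nw" using assms by simp
      moreover have "(p - 1) div Nw < Nd"
      proof -
        have "p - 1 < Nd * Nw" using p by (auto simp: mult.commute)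
        then show ?thesis using less_mult_imp_div_less by blast
      qed
      ultimately show "x \<in> {1..Nw} \<times> {1..Nd}" using p by auto
    qed
    show "?g ` ({1..Nw} \<times> {1..Nd}) \<subseteq> {1..Nw * Nd}"
    proof
      fix x assume "x \<in> ?g ` ({1..Nw} \<times> {1..Nd})"
      then obtain k j where a: "x = k + (j - 1) * Nw" "1 \<le> k" "k \<le> Nw" "1 \<le> j" "j \<le> Nd" by auto
      have "(j - 1) * Nw \<le> (Nd - 1) * Nw" using a by simp
      then have "k + (j - 1) * Nw \<le> Nw + (Nd - 1) * Nw" using a by linarith
      also have "\<dots> = Nw * Nd" using a by (cases Nd) (auto simp: algebra_simps)
      finally show "x \<in> {1..Nw * Nd}" using a by auto
    qed
  qed
  have "(\<Sum>k\<in>{1..Nw}. \<Sum>j\<in>{1..Nd}. f k j) = (\<Sum>x\<in>{1..Nw} \<times> {1..Nd}. f (fst x) (snd x))"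
    by (simp add: sum.cartesian_product case_prod_beta)
  also have "\<dots> = (\<Sum>p\<in>{1..Nw*Nd}. f (fst (?h p)) (snd (?h p)))"
    by (rule sum.reindex_bij_betw[OF b, symmetric])
  finally show ?thesis by simp
qed


lemma delta_sum:
  fixes w :: "nat \<Rightarrow> real"
  assumes "finite A"
  shows "(\<Sum>q\<in>A. w p * (if p = q then c else 0) * w q) = (if p \<in> A then w p * c * w p else 0)"
proof -
  have "(\<Sum>q\<in>A. w p * (if p = q then c else 0) * w q) = (\<Sum>q\<in>A. if p = q then w p * c * w p else 0)"
    by (rule sum.cong) auto
  also have "\<dots> = (if p \<in> A then w p * c * w p else 0)" using assms by simp
  finally show ?thesis .
qed

theorem corollary1:
  fixes L Nw Nd :: nat and sig N0 :: real
    and At :: "nat \<Rightarrow> nat \<Rightarrow> real"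
    and ymap :: "nat \<Rightarrow> nat \<Rightarrow> nat \<Rightarrow> real"
    and y :: "nat \<Rightarrow> nat \<Rightarrow> real"
  assumes "L \<ge> 1" and "Nw \<ge> 1" and "Nd \<ge> 1"
    and "sig > 0" and "N0 > 0"
    and "\<And>k j. k \<in> {1..Nw} \<Longrightarrow> j \<in> {1..Nd} \<Longrightarrow> At k j > 0"
  shows "max_lik_estimates L Nw Nd sig N0 At ymap y =
    {l \<in> {1..L}. \<forall>m\<in>{1..L}.
       Gnorm (Nw * Nd) (Gmat Nw sig N0 At) (\<lambda>p. vecz Nw y p - vecz Nw (ymap l) p)
       \<le> Gnorm (Nw * Nd) (Gmat Nw sig N0 At) (\<lambda>p. vecz Nw y p - vecz Nw (ymap m) p)}"
proof -
  define v where "v k j = 2 * sig\<^sup>2 + N0 / At k j" for k j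
  define e where "e l k j = (y k j - ymap l k j) * (1 / v k j) * (y k j - ymap l k j)" for l k j
  define Q where "Q l = (\<Sum>k\<in>{1..Nw}. \<Sum>j\<in>{1..Nd}. e l k j)" for l
  define c where "c k j = 1 / sqrt (2 * pi * v k j)" for k j
  define C where "C = (\<Prod>k\<in>{1..Nw}. \<Prod>j\<in>{1..Nd}. c k j)"
  define lik where "lik l = img_lik Nw Nd sig N0 At (ymap l) y" for l
  have vpos: "v k j > 0" if "k \<in> {1..Nw}" "j \<in> {1..Nd}" for k j
    using assms(4,5) assms(6)[OF that] unfolding v_def by (simp add: add_pos_pos)
  have Cpos: "C > 0" unfolding C_def c_def
    by (intro prod_pos) (auto intro!: vpos mult_pos_pos)
  have G: "Gnorm (Nw * Nd) (Gmat Nw sig N0 At) (\<lambda>p. vecz Nw y p - vecz Nw (ymap l) p) = sqrt (Q l)" for l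
  proof -
    let ?w = "\<lambda>p. vecz Nw y p - vecz Nw (ymap l) p"
    have "(\<Sum>p\<in>{1..Nw*Nd}. \<Sum>q\<in>{1..Nw*Nd}. ?w p * Gmat Nw sig N0 At p q * ?w q)
        = (\<Sum>p\<in>{1..Nw*Nd}. e l ((p - 1) mod Nw + 1) ((p - 1) div Nw + 1))"
      unfolding Gmat_def
      by (rule sum.cong[OF refl], subst delta_sum) (auto simp: e_def v_def vecz_def)
    also have "\<dots> = Q l" unfolding Q_def by (rule reindex_sum[OF assms(2)])
    finally show ?thesis unfolding Gnorm_def by simp
  qed
  have L: "lik l = C * exp (- Q l / 2)" for l
  proof -
    have "lik l = (\<Prod>k\<in>{1..Nw}. \<Prod>j\<in>{1..Nd}. c k j * exp (- e l k j / 2))"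
      unfolding lik_def img_lik_def
    proof (intro prod.cong refl)
      fix k j assume kj: "k \<in> {1..Nw}" "j \<in> {1..Nd}"
      have "tile_lik sig N0 (At k j) (ymap l k j) (y k j) = normal_density (ymap l k j) (sqrt (v k j)) (y k j)"
        unfolding v_def using assms(4,5) assms(6)[OF kj] by (rule tile_lik_eq)
      also have "\<dots> = c k j * exp (- e l k j / 2)"
        using vpos[OF kj] unfolding normal_density_def c_def e_def
        by (simp add: power2_eq_square field_simps)
      finally show "tile_lik sig N0 (At k j) (ymap l k j) (y k j) = c k j * exp (- e l k j / 2)" .
    qed
    also have "\<dots> = C * (\<Prod>k\<in>{1..Nw}. \<Prod>j\<in>{1..Nd}. exp (- e l k j / 2))"
      unfolding C_def by (simp add: prod.distrib)
    also have "\<dots> = C * exp (\<Sum>k\<in>{1..Nw}. \<Sum>j\<in>{1..Nd}. - e l k j / 2)"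
      by (simp add: exp_sum)
    also have "(\<Sum>k\<in>{1..Nw}. \<Sum>j\<in>{1..Nd}. - e l k j / 2) = - Q l / 2"
      unfolding Q_def by (simp add: sum_negf sum_divide_distrib)
    finally show ?thesis .
  qed
  have D: "(\<Sum>m\<in>{1..L}. (1 / real L) * lik m) > 0"
    using assms(1) Cpos by (intro sum_pos) (auto simp: L)
  have key: "posterior L Nw Nd sig N0 At ymap y m \<le> posterior L Nw Nd sig N0 At ymap y l
     \<longleftrightarrow> sqrt (Q l) \<le> sqrt (Q m)" for l m
  proof -
    have "posterior L Nw Nd sig N0 At ymap y m \<le> posterior L Nw Nd sig N0 At ymap y l
       \<longleftrightarrow> lik m \<le> lik l"
    proof -
      have Lp: "0 < real L" using assms(1) by simp
      have "\<not> real L * (\<Sum>m = Suc 0..L. lik m / real L) < 0"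
        using D Lp by (simp add: not_less mult_nonneg_nonneg less_imp_le)
      then show ?thesis
        unfolding posterior_def lik_def[symmetric] using D Lp by (simp add: divide_le_cancel)
    qed
    also have "\<dots> \<longleftrightarrow> exp (- Q m / 2) \<le> exp (- Q l / 2)" using Cpos by (simp add: L)
    also have "\<dots> \<longleftrightarrow> sqrt (Q l) \<le> sqrt (Q m)" by simp
    finally show ?thesis .
  qed
  show ?thesis unfolding max_lik_estimates_def G key ..
qed

end
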